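(* Let $k,l,m$ be pairwise distinct complex parameters and $J,\widetilde J,\widehat J$ pairwise commuting invertible constant $N\times N$ matrices, with variables $\xi^J_k,\xi^{\widetilde J}_l,\xi^{\widehat J}_m$ and $N\times N$ matrix fields $H_{kl},H_{lk},H_{lm},H_{ml},H_{km},H_{mk}$. Define \begin{align*} \mathcal L_{klm}=&\tfrac12\operatorname{tr}\Big\{H_{ml}\widetilde J(\partial^J_kH_{lm})\widehat J-(\partial^J_kH_{ml})\widetilde JH_{lm}\widehat J+H_{km}\widehat J(\partial^{\widetilde J}_lH_{mk})J-(\partial^{\widetilde J}_lH_{km})\widehat JH_{mk}J\\ &\qquad+H_{lk}J(\partial^{\widehat J}_mH_{kl})\widetilde J-(\partial^{\widehat J}_mH_{lk})JH_{kl}\widetilde J\Big\}\\ &+\operatorname{tr}\Big\{H_{ml}\widetilde JH_{lm}\frac{J\widehat J}{k-m}-H_{ml}\frac{\widetilde JJ}{k-l}H_{lm}\widehat J+H_{km}\widehat JH_{mk}\frac{\widetilde JJ}{l-k}-H_{km}\frac{\widehat J\widetilde J}{l-m}H_{mk}J\\ &\qquad+H_{lk}JH_{kl}\frac{\widehat J\widetilde J}{m-l}-H_{lk}\frac{\widehat JJ}{m-k}H_{kl}\widetilde J\Big\} +\operatorname{tr}\Big\{H_{lm}\widehat JH_{mk}JH_{kl}\widetilde J-H_{ml}\widetilde JH_{lk}JH_{km}\widehat J\Big\}. \end{align*} Then the Euler–Lagrange equations of $\mathcal L_{klm}$ with respect to the six fields are equivalent to the six equations $$\partial^J_kH_{lm}=\tfrac{J}{k-l}H_{lm}-H_{lm}\tfrac{J}{k-m}+H_{lk}JH_{km},\qquad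 \partial^J_kH_{ml}=\tfrac{J}{k-m}H_{ml}-H_{ml}\tfrac{J}{k-l}+H_{mk}JH_{kl},$$ $$\partial^{\widetilde J}_lH_{mk}=\tfrac{\widetilde J}{l-m}H_{mk}-H_{mk}\tfrac{\widetilde J}{l-k}+H_{ml}\widetilde JH_{lk},\qquad \partial^{\widetilde J}_lH_{km}=\tfrac{\widetilde J}{l-k}H_{km}-H_{km}\tfrac{\widetilde J}{l-m}+H_{kl}\widetilde JH_{lm},$$ $$\partial^{\widehat J}_mH_{kl}=\tfrac{\widehat J}{m-k}H_{kl}-H_{kl}\tfrac{\widehat J}{m-l}+H_{km}\widehat JH_{ml},\qquad \partial^{\widehat J}_mH_{lk}=\tfrac{\widehat J}{m-l}H_{lk}-H_{lk}\tfrac{\widehat J}{m-k}+H_{lm}\widehat JH_{mk}.$$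
   Context: $\partial^J_k=\partial/\partial\xi^J_k$ etc.; $\operatorname{tr}$ is the matrix trace; the Euler–Lagrange equations are the standard ones for a Lagrangian density in the three independent variables $\xi^J_k,\xi^{\widetilde J}_l,\xi^{\widehat J}_m$, obtained by varying each matrix entry of each field independently. *)

theory Defs
  imports "HOL-Analysis.Analysis"
begin

text \<open>The six matrix fields and the three independent variables
  (Dk = xi^J_k, Dl = xi^{J~}_l, Dm = xi^{J^}_m).\<close>
datatype fld = Hkl | Hlk | Hlm | Hml | Hkm | Hmk
datatype dir = Dk | Dl | Dm

type_synonym 'n cmat = "complex^('n::finite)^'n"

definition mdiv :: "('n::finite) cmat \<Rightarrow> complex \<Rightarrow> ('n::finite) cmat" where
  "mdiv A c = (\<chi> i j. A$i$j / c)"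

definition pd :: "((dir \<Rightarrow> real) \<Rightarrow> 'a::real_normed_vector) \<Rightarrow> (dir \<Rightarrow> real) \<Rightarrow> dir \<Rightarrow> 'a" where
  "pd F \<xi> d = vector_derivative (\<lambda>t. F (\<xi>(d := t))) (at (\<xi> d))"

text \<open>The Lagrangian density as a function of the jet: field values u and
  first derivatives du d f = partial derivative of field f in direction d.\<close>
definition Lag :: "complex \<Rightarrow> complex \<Rightarrow> complex \<Rightarrow> ('n::finite) cmat \<Rightarrow> ('n::finite) cmat \<Rightarrow> ('n::finite) cmat
    \<Rightarrow> (fld \<Rightarrow> ('n::finite) cmat) \<Rightarrow> (dir \<Rightarrow> fld \<Rightarrow> ('n::finite) cmat) \<Rightarrow> complex" where
  "Lag k l m J Jt Jh u du =
     (1/2) * trace (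
         u Hml ** Jt ** du Dk Hlm ** Jh - du Dk Hml ** Jt ** u Hlm ** Jh
       + u Hkm ** Jh ** du Dl Hmk ** J - du Dl Hkm ** Jh ** u Hmk ** J
       + u Hlk ** J ** du Dm Hkl ** Jt - du Dm Hlk ** J ** u Hkl ** Jt)
   + trace (
         u Hml ** Jt ** u Hlm ** mdiv (J ** Jh) (k - m)
       - u Hml ** mdiv (Jt ** J) (k - l) ** u Hlm ** Jh
       + u Hkm ** Jh ** u Hmk ** mdiv (Jt ** J) (l - k)
       - u Hkm ** mdiv (Jh ** Jt) (l - m) ** u Hmk ** J
       + u Hlk ** J ** u Hkl ** mdiv (Jh ** Jt) (m - l)
       - u Hlk ** mdiv (Jh ** J) (m - k) ** u Hkl ** Jt)
   + trace (u Hlm ** Jh ** u Hmk ** J ** u Hkl ** Jt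
          - u Hml ** Jt ** u Hlk ** J ** u Hkm ** Jh)"

definition pert :: "('n::finite) cmat \<Rightarrow> 'n \<Rightarrow> 'n \<Rightarrow> complex \<Rightarrow> ('n::finite) cmat" where
  "pert A i j t = (\<chi> a b. if a = i \<and> b = j then A$a$b + t else A$a$b)"

definition dL_du :: "((fld \<Rightarrow> ('n::finite) cmat) \<Rightarrow> (dir \<Rightarrow> fld \<Rightarrow> ('n::finite) cmat) \<Rightarrow> complex)
    \<Rightarrow> fld \<Rightarrow> 'n \<Rightarrow> 'n \<Rightarrow> (fld \<Rightarrow> ('n::finite) cmat) \<Rightarrow> (dir \<Rightarrow> fld \<Rightarrow> ('n::finite) cmat) \<Rightarrow> complex" where
  "dL_du L f i j u du = deriv (\<lambda>t. L (u(f := pert (u f) i j t)) du) 0"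

definition dL_ddu :: "((fld \<Rightarrow> ('n::finite) cmat) \<Rightarrow> (dir \<Rightarrow> fld \<Rightarrow> ('n::finite) cmat) \<Rightarrow> complex)
    \<Rightarrow> dir \<Rightarrow> fld \<Rightarrow> 'n \<Rightarrow> 'n \<Rightarrow> (fld \<Rightarrow> ('n::finite) cmat) \<Rightarrow> (dir \<Rightarrow> fld \<Rightarrow> ('n::finite) cmat) \<Rightarrow> complex" where
  "dL_ddu L d f i j u du = deriv (\<lambda>t. L u (du(d := (du d)(f := pert (du d f) i j t)))) 0"

definition EL :: "((fld \<Rightarrow> ('n::finite) cmat) \<Rightarrow> (dir \<Rightarrow> fld \<Rightarrow> ('n::finite) cmat) \<Rightarrow> complex)
    \<Rightarrow> (fld \<Rightarrow> (dir \<Rightarrow> real) \<Rightarrow> ('n::finite) cmat) \<Rightarrow> fld \<Rightarrow> 'n \<Rightarrow> 'n \<Rightarrow> (dir \<Rightarrow> real) \<Rightarrow> bool" where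
  "EL L H f i j \<xi> \<longleftrightarrow>
     dL_du L f i j (\<lambda>g. H g \<xi>) (\<lambda>d g. pd (H g) \<xi> d)
     - (\<Sum>d\<in>UNIV. pd (\<lambda>\<zeta>. dL_ddu L d f i j (\<lambda>g. H g \<zeta>) (\<lambda>d' g. pd (H g) \<zeta> d')) \<xi> d) = 0"

end

theory Submission
  imports Defs
begin


definition Emat :: "'n \<Rightarrow> 'n \<Rightarrow> ('n::finite) cmat" where
  "Emat i j = (\<chi> a b. if a = i \<and> b = j then 1 else 0)"
definition sm :: "complex \<Rightarrow> ('n::finite) cmat \<Rightarrow> 'n cmat" where
  "sm c A = (\<chi> a b. c * A$a$b)"

lemma sm_comp[simp]: "sm c A $ a $ b = c * A $ a $ b" by (simp add: sm_def)
lemma pert_sm: "pert A i j t = A + sm t (Emat i j)"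
  by (simp add: pert_def vec_eq_iff Emat_def)
lemma mdiv_sm: "mdiv A c = sm (1/c) A"
  by (simp add: mdiv_def vec_eq_iff sm_def)
lemma mm_comp: "(A ** B) $ a $ b = (\<Sum>c\<in>UNIV. A$a$c * B$c$b)"
  by (simp add: matrix_matrix_mult_def)
lemma sm_mult_l: "sm c A ** B = sm c (A ** B)"
  by (simp add: vec_eq_iff mm_comp sum_distrib_left mult.assoc)
lemma sm_mult_r: "A ** sm c B = sm c (A ** B)"
  by (simp add: vec_eq_iff mm_comp sum_distrib_left algebra_simps)
lemma sm_sm: "sm c (sm d A) = sm (c*d) A" by (simp add: vec_eq_iff)
lemma sm_add: "sm c (A + B) = sm c A + sm c B" by (simp add: vec_eq_iff algebra_simps)
lemma sm_diff: "sm c (A - B) = sm c A - sm c B" by (simp add: vec_eq_iff algebra_simps)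
lemma mr_add: "(A + B) ** (C::complex^'p::finite^'n::finite) = A ** C + B ** C"
  by (simp add: vec_eq_iff mm_comp algebra_simps sum.distrib)
lemma mr_diff: "(A - B) ** (C::complex^'p::finite^'n::finite) = A ** C - B ** C"
  by (simp add: vec_eq_iff mm_comp algebra_simps sum_subtractf)
lemma ml_diff: "(C::complex^'p::finite^'n::finite) ** (A - B) = C ** A - C ** B"
  by (simp add: vec_eq_iff mm_comp algebra_simps sum_subtractf)
lemma mr_neg: "(- A) ** (C::complex^'p::finite^'n::finite) = - (A ** C)"
  by (simp add: vec_eq_iff mm_comp sum_negf)
lemma ml_neg: "(C::complex^'p::finite^'n::finite) ** (- A) = - (C ** A)"
  by (simp add: vec_eq_iff mm_comp sum_negf)
lemma trace_sm: "trace (sm c A) = c * trace A"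
  by (simp add: trace_def sum_distrib_left)
lemma trace_E0: "trace (Emat i j ** B) = B $ j $ i"
proof -
  have "\<And>a. (\<Sum>c\<in>UNIV. Emat i j $ a $ c * B $ c $ a) = (if a = i then B $ j $ a else 0)"
    by (simp add: Emat_def if_distrib if_distribR cong: if_cong)
  then show ?thesis by (simp add: trace_def mm_comp)
qed
lemma trace_E1: "trace (A ** (Emat i j ** B)) = (B ** A) $ j $ i"
  by (metis trace_E0 trace_mul_sym matrix_mul_assoc)
lemma trace_E2: "trace (A1 ** (A2 ** (Emat i j ** B))) = (B ** (A1 ** A2)) $ j $ i"
  using trace_E1[of "A1 ** A2" i j B] by (simp only: matrix_mul_assoc)
lemma trace_E3: "trace (A1 ** (A2 ** (A3 ** (Emat i j ** B)))) = (B ** (A1 ** (A2 ** A3))) $ j $ i"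
  using trace_E1[of "A1 ** A2 ** A3" i j B] by (simp only: matrix_mul_assoc)
lemma trace_E4: "trace (A1 ** (A2 ** (A3 ** (A4 ** (Emat i j ** B))))) = (B ** (A1 ** (A2 ** (A3 ** A4)))) $ j $ i"
  using trace_E1[of "A1 ** A2 ** A3 ** A4" i j B] by (simp only: matrix_mul_assoc)

lemmas norm_simps = pert_sm mdiv_sm sm_mult_l sm_mult_r sm_sm sm_add sm_diff mr_add mr_diff
  matrix_add_ldistrib ml_diff mr_neg ml_neg matrix_mul_assoc[symmetric] trace_add trace_sub trace_sm
  trace_E0 trace_E1 trace_E2 trace_E3 trace_E4

lemma deriv_aff: "deriv (\<lambda>t::complex. a + t * b) 0 = b"
  by (rule DERIV_imp_deriv) (auto intro!: derivative_eq_intros)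



fun Cu :: "complex \<Rightarrow> complex \<Rightarrow> complex \<Rightarrow> ('n::finite) cmat \<Rightarrow> 'n cmat \<Rightarrow> 'n cmat \<Rightarrow> fld
   \<Rightarrow> (fld \<Rightarrow> 'n cmat) \<Rightarrow> (dir \<Rightarrow> fld \<Rightarrow> 'n cmat) \<Rightarrow> 'n cmat" where
 "Cu k l m J Jt Jh Hml u du = sm (1/2) (Jt ** du Dk Hlm ** Jh) + Jt ** u Hlm ** mdiv (J**Jh) (k-m) - mdiv (Jt**J) (k-l) ** u Hlm ** Jh - Jt ** u Hlk ** J ** u Hkm ** Jh"
|"Cu k l m J Jt Jh Hlm u du = sm (-1/2) (Jh ** du Dk Hml ** Jt) + mdiv (J**Jh) (k-m) ** u Hml ** Jt - Jh ** u Hml ** mdiv (Jt**J) (k-l) + Jh ** u Hmk ** J ** u Hkl ** Jt"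
|"Cu k l m J Jt Jh Hkm u du = sm (1/2) (Jh ** du Dl Hmk ** J) + Jh ** u Hmk ** mdiv (Jt**J) (l-k) - mdiv (Jh**Jt) (l-m) ** u Hmk ** J - Jh ** u Hml ** Jt ** u Hlk ** J"
|"Cu k l m J Jt Jh Hmk u du = sm (-1/2) (J ** du Dl Hkm ** Jh) + mdiv (Jt**J) (l-k) ** u Hkm ** Jh - J ** u Hkm ** mdiv (Jh**Jt) (l-m) + J ** u Hkl ** Jt ** u Hlm ** Jh"
|"Cu k l m J Jt Jh Hlk u du = sm (1/2) (J ** du Dm Hkl ** Jt) + J ** u Hkl ** mdiv (Jh**Jt) (m-l) - mdiv (Jh**J) (m-k) ** u Hkl ** Jt - J ** u Hkm ** Jh ** u Hml ** Jt"
|"Cu k l m J Jt Jh Hkl u du = sm (-1/2) (Jt ** du Dm Hlk ** J) + mdiv (Jh**Jt) (m-l) ** u Hlk ** J - Jt ** u Hlk ** mdiv (Jh**J) (m-k) + Jt ** u Hlm ** Jh ** u Hmk ** J"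

lemma Lag_u: "Lag k l m J Jt Jh (u(f := pert (u f) i j t)) du = Lag k l m J Jt Jh u du + t * (Cu k l m J Jt Jh f u du) $ j $ i"
  by (cases f) (simp_all add: Lag_def norm_simps algebra_simps)



fun ddc :: "dir \<Rightarrow> fld \<Rightarrow> complex" where
  "ddc Dk Hlm = 1/2" | "ddc Dk Hml = -1/2" | "ddc Dl Hmk = 1/2" | "ddc Dl Hkm = -1/2"
| "ddc Dm Hkl = 1/2" | "ddc Dm Hlk = -1/2" | "ddc _ _ = 0"
fun ddg :: "dir \<Rightarrow> fld \<Rightarrow> fld" where
  "ddg Dk Hlm = Hml" | "ddg Dk Hml = Hlm" | "ddg Dl Hmk = Hkm" | "ddg Dl Hkm = Hmk"
| "ddg Dm Hkl = Hlk" | "ddg Dm Hlk = Hkl" | "ddg _ _ = Hkl"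
fun ddA :: "('n::finite) cmat \<Rightarrow> 'n cmat \<Rightarrow> 'n cmat \<Rightarrow> dir \<Rightarrow> fld \<Rightarrow> 'n cmat" where
  "ddA J Jt Jh Dk Hlm = Jh" | "ddA J Jt Jh Dk Hml = Jt" | "ddA J Jt Jh Dl Hmk = J" | "ddA J Jt Jh Dl Hkm = Jh"
| "ddA J Jt Jh Dm Hkl = Jt" | "ddA J Jt Jh Dm Hlk = J" | "ddA J Jt Jh _ _ = 0"
fun ddB :: "('n::finite) cmat \<Rightarrow> 'n cmat \<Rightarrow> 'n cmat \<Rightarrow> dir \<Rightarrow> fld \<Rightarrow> 'n cmat" where
  "ddB J Jt Jh Dk Hlm = Jt" | "ddB J Jt Jh Dk Hml = Jh" | "ddB J Jt Jh Dl Hmk = Jh" | "ddB J Jt Jh Dl Hkm = J"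
| "ddB J Jt Jh Dm Hkl = J" | "ddB J Jt Jh Dm Hlk = Jt" | "ddB J Jt Jh _ _ = 0"

lemma Lag_du: "Lag k l m J Jt Jh u (du(d := (du d)(f := pert (du d f) i j t))) = Lag k l m J Jt Jh u du
   + t * (sm (ddc d f) (ddA J Jt Jh d f ** u (ddg d f) ** ddB J Jt Jh d f)) $ j $ i"
  by (cases d; cases f) (simp_all add: Lag_def norm_simps algebra_simps)



lemma scaleR_sm: "r *\<^sub>R (X::'n::finite cmat) = sm (of_real r) X"
  by (simp only: vec_eq_iff vector_scaleR_component sm_comp) (simp add: scaleR_conv_of_real)

lemma bl_F: fixes A B :: "'n::finite cmat" shows "bounded_linear (\<lambda>X::'n::finite cmat. (sm c (A ** X ** B)) $ j $ i)"
proof -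
  have "linear (\<lambda>X::'n::finite cmat. (sm c (A ** X ** B)) $ j $ i)"
  proof (rule linearI)
    fix x y :: "'n cmat" and r :: real
    have "sm c (A ** (x + y) ** B) = sm c (A ** x ** B) + sm c (A ** y ** B)"
      by (simp only: matrix_add_ldistrib mr_add sm_add)
    then show "(sm c (A ** (x + y) ** B)) $ j $ i = (sm c (A ** x ** B)) $ j $ i + (sm c (A ** y ** B)) $ j $ i"
      by simp
    have "sm c (A ** (r *\<^sub>R x) ** B) = sm (of_real r) (sm c (A ** x ** B))"
      by (simp only: scaleR_sm sm_mult_l sm_mult_r sm_sm mult.commute)
    then show "(sm c (A ** (r *\<^sub>R x) ** B)) $ j $ i = r *\<^sub>R (sm c (A ** x ** B)) $ j $ i"
      by (simp add: scaleR_conv_of_real)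
  qed
  then show ?thesis by (simp add: linear_conv_bounded_linear)
qed

lemma pd_lin:
  fixes H :: "fld \<Rightarrow> (dir \<Rightarrow> real) \<Rightarrow> ('n::finite) cmat" and A B :: "'n cmat"
  assumes "\<And>g \<xi> d. (\<lambda>t. H g (\<xi>(d := t))) differentiable (at (\<xi> d))"
  shows "pd (\<lambda>\<zeta>. (sm c (A ** H g \<zeta> ** B)) $ j $ i) \<xi> d = (sm c (A ** pd (H g) \<xi> d ** B)) $ j $ i"
proof -
  have "((\<lambda>t. H g (\<xi>(d := t))) has_vector_derivative pd (H g) \<xi> d) (at (\<xi> d))"
    unfolding pd_def by (rule vector_derivative_works[THEN iffD1, OF assms])
  from bounded_linear.has_vector_derivative[OF bl_F this, of c A B j i]
  show ?thesis unfolding pd_def by (rule vector_derivative_at)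
qed

lemma inv0:
  fixes P Q Y :: "'n::finite cmat"
  assumes "invertible P" "invertible Q"
  shows "(\<forall>i j. (P ** Y ** Q) $ j $ i = 0) \<longleftrightarrow> Y = 0"
proof
  assume "\<forall>i j. (P ** Y ** Q) $ j $ i = 0"
  then have z: "P ** Y ** Q = 0" by (simp add: vec_eq_iff)
  obtain P' where P': "P' ** P = mat 1" using assms(1) unfolding invertible_def by blast
  obtain Q' where Q': "Q ** Q' = mat 1" using assms(2) unfolding invertible_def by blast
  have "P' ** (P ** Y ** Q) ** Q' = (P' ** P) ** Y ** (Q ** Q')" by (simp only: matrix_mul_assoc)
  then have "Y = P' ** (P ** Y ** Q) ** Q'" using P' Q' by simp
  then show "Y = 0" using z by simp
qed simp

lemma UNIV_dir: "(UNIV::dir set) = {Dk, Dl, Dm}"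
  using dir.exhaust by auto
lemma all_fld: "(\<forall>f. P f) = (P Hml \<and> P Hlm \<and> P Hkm \<and> P Hmk \<and> P Hlk \<and> P Hkl)"
  by (metis fld.exhaust)


context
  fixes J Jt Jh :: "'n::finite cmat"
  assumes c1: "Jt ** J = J ** Jt" and c2: "Jh ** J = J ** Jh" and c3: "Jh ** Jt = Jt ** Jh"
begin
lemma c1': "Jt ** (J ** X) = J ** (Jt ** X)" for X :: "'n cmat" by (simp add: matrix_mul_assoc c1)
lemma c2': "Jh ** (J ** X) = J ** (Jh ** X)" for X :: "'n cmat" by (simp add: matrix_mul_assoc c2)
lemma c3': "Jh ** (Jt ** X) = Jt ** (Jh ** X)" for X :: "'n cmat" by (simp add: matrix_mul_assoc c3)
lemma Z_Hml: "Cu k l m J Jt Jh Hml U V - (sm (ddc Dk Hml) (ddA J Jt Jh Dk Hml ** V Dk (ddg Dk Hml) ** ddB J Jt Jh Dk Hml)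
      + sm (ddc Dl Hml) (ddA J Jt Jh Dl Hml ** V Dl (ddg Dl Hml) ** ddB J Jt Jh Dl Hml)
      + sm (ddc Dm Hml) (ddA J Jt Jh Dm Hml ** V Dm (ddg Dm Hml) ** ddB J Jt Jh Dm Hml))
      = Jt ** (V Dk Hlm - (mdiv J (k - l) ** U Hlm - U Hlm ** mdiv J (k - m) + U Hlk ** J ** U Hkm)) ** Jh"
  by (simp only: Cu.simps ddc.simps ddA.simps ddB.simps ddg.simps norm_simps c1 c2 c3 c1' c2' c3' times0_left times0_right)
    (simp add: vec_eq_iff; simp add: algebra_simps)
lemma Z_Hlm: "Cu k l m J Jt Jh Hlm U V - (sm (ddc Dk Hlm) (ddA J Jt Jh Dk Hlm ** V Dk (ddg Dk Hlm) ** ddB J Jt Jh Dk Hlm)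
      + sm (ddc Dl Hlm) (ddA J Jt Jh Dl Hlm ** V Dl (ddg Dl Hlm) ** ddB J Jt Jh Dl Hlm)
      + sm (ddc Dm Hlm) (ddA J Jt Jh Dm Hlm ** V Dm (ddg Dm Hlm) ** ddB J Jt Jh Dm Hlm))
      = Jh ** ((mdiv J (k - m) ** U Hml - U Hml ** mdiv J (k - l) + U Hmk ** J ** U Hkl) - V Dk Hml) ** Jt"
  by (simp only: Cu.simps ddc.simps ddA.simps ddB.simps ddg.simps norm_simps c1 c2 c3 c1' c2' c3' times0_left times0_right)
    (simp add: vec_eq_iff; simp add: algebra_simps)
lemma Z_Hkm: "Cu k l m J Jt Jh Hkm U V - (sm (ddc Dk Hkm) (ddA J Jt Jh Dk Hkm ** V Dk (ddg Dk Hkm) ** ddB J Jt Jh Dk Hkm)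
      + sm (ddc Dl Hkm) (ddA J Jt Jh Dl Hkm ** V Dl (ddg Dl Hkm) ** ddB J Jt Jh Dl Hkm)
      + sm (ddc Dm Hkm) (ddA J Jt Jh Dm Hkm ** V Dm (ddg Dm Hkm) ** ddB J Jt Jh Dm Hkm))
      = Jh ** (V Dl Hmk - (mdiv Jt (l - m) ** U Hmk - U Hmk ** mdiv Jt (l - k) + U Hml ** Jt ** U Hlk)) ** J"
  by (simp only: Cu.simps ddc.simps ddA.simps ddB.simps ddg.simps norm_simps c1 c2 c3 c1' c2' c3' times0_left times0_right)
    (simp add: vec_eq_iff; simp add: algebra_simps)
lemma Z_Hmk: "Cu k l m J Jt Jh Hmk U V - (sm (ddc Dk Hmk) (ddA J Jt Jh Dk Hmk ** V Dk (ddg Dk Hmk) ** ddB J Jt Jh Dk Hmk)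
      + sm (ddc Dl Hmk) (ddA J Jt Jh Dl Hmk ** V Dl (ddg Dl Hmk) ** ddB J Jt Jh Dl Hmk)
      + sm (ddc Dm Hmk) (ddA J Jt Jh Dm Hmk ** V Dm (ddg Dm Hmk) ** ddB J Jt Jh Dm Hmk))
      = J ** ((mdiv Jt (l - k) ** U Hkm - U Hkm ** mdiv Jt (l - m) + U Hkl ** Jt ** U Hlm) - V Dl Hkm) ** Jh"
  by (simp only: Cu.simps ddc.simps ddA.simps ddB.simps ddg.simps norm_simps c1 c2 c3 c1' c2' c3' times0_left times0_right)
    (simp add: vec_eq_iff; simp add: algebra_simps)
lemma Z_Hlk: "Cu k l m J Jt Jh Hlk U V - (sm (ddc Dk Hlk) (ddA J Jt Jh Dk Hlk ** V Dk (ddg Dk Hlk) ** ddB J Jt Jh Dk Hlk)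
      + sm (ddc Dl Hlk) (ddA J Jt Jh Dl Hlk ** V Dl (ddg Dl Hlk) ** ddB J Jt Jh Dl Hlk)
      + sm (ddc Dm Hlk) (ddA J Jt Jh Dm Hlk ** V Dm (ddg Dm Hlk) ** ddB J Jt Jh Dm Hlk))
      = J ** (V Dm Hkl - (mdiv Jh (m - k) ** U Hkl - U Hkl ** mdiv Jh (m - l) + U Hkm ** Jh ** U Hml)) ** Jt"
  by (simp only: Cu.simps ddc.simps ddA.simps ddB.simps ddg.simps norm_simps c1 c2 c3 c1' c2' c3' times0_left times0_right)
    (simp add: vec_eq_iff; simp add: algebra_simps)
lemma Z_Hkl: "Cu k l m J Jt Jh Hkl U V - (sm (ddc Dk Hkl) (ddA J Jt Jh Dk Hkl ** V Dk (ddg Dk Hkl) ** ddB J Jt Jh Dk Hkl)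
      + sm (ddc Dl Hkl) (ddA J Jt Jh Dl Hkl ** V Dl (ddg Dl Hkl) ** ddB J Jt Jh Dl Hkl)
      + sm (ddc Dm Hkl) (ddA J Jt Jh Dm Hkl ** V Dm (ddg Dm Hkl) ** ddB J Jt Jh Dm Hkl))
      = Jt ** ((mdiv Jh (m - l) ** U Hlk - U Hlk ** mdiv Jh (m - k) + U Hlm ** Jh ** U Hmk) - V Dm Hlk) ** J"
  by (simp only: Cu.simps ddc.simps ddA.simps ddB.simps ddg.simps norm_simps c1 c2 c3 c1' c2' c3' times0_left times0_right)
    (simp add: vec_eq_iff; simp add: algebra_simps)
end


lemma dLu: "dL_du (Lag k l m J Jt Jh) f i j u du = (Cu k l m J Jt Jh f u du) $ j $ i"
proof -
  have "(\<lambda>t. Lag k l m J Jt Jh (u(f := pert (u f) i j t)) du) = (\<lambda>t. Lag k l m J Jt Jh u du + t * (Cu k l m J Jt Jh f u du) $ j $ i)"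
    by (rule ext, rule Lag_u)
  then show ?thesis unfolding dL_du_def by (simp only: deriv_aff)
qed

lemma dLdu: "dL_ddu (Lag k l m J Jt Jh) d f i j u du = (sm (ddc d f) (ddA J Jt Jh d f ** u (ddg d f) ** ddB J Jt Jh d f)) $ j $ i"
proof -
  have "(\<lambda>t. Lag k l m J Jt Jh u (du(d := (du d)(f := pert (du d f) i j t)))) = (\<lambda>t. Lag k l m J Jt Jh u du + t * (sm (ddc d f) (ddA J Jt Jh d f ** u (ddg d f) ** ddB J Jt Jh d f)) $ j $ i)"
    by (rule ext, rule Lag_du)
  then show ?thesis unfolding dL_ddu_def by (simp only: deriv_aff)
qed

lemma EL_eq:
  fixes H :: "fld \<Rightarrow> (dir \<Rightarrow> real) \<Rightarrow> ('n::finite) cmat" and J Jt Jh :: "'n cmat"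
  assumes "\<And>f \<xi> d. (\<lambda>t. H f (\<xi>(d := t))) differentiable (at (\<xi> d))"
  shows "EL (Lag k l m J Jt Jh) H f i j \<xi> \<longleftrightarrow> (Cu k l m J Jt Jh f (\<lambda>g. H g \<xi>) (\<lambda>d g. pd (H g) \<xi> d)
      - (sm (ddc Dk f) (ddA J Jt Jh Dk f ** pd (H (ddg Dk f)) \<xi> Dk ** ddB J Jt Jh Dk f)
      + sm (ddc Dl f) (ddA J Jt Jh Dl f ** pd (H (ddg Dl f)) \<xi> Dl ** ddB J Jt Jh Dl f)
      + sm (ddc Dm f) (ddA J Jt Jh Dm f ** pd (H (ddg Dm f)) \<xi> Dm ** ddB J Jt Jh Dm f))) $ j $ i = 0"
proof -
  show ?thesis
    unfolding EL_def dLu dLdu pd_lin[OF assms] UNIV_dir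
    by (simp add: add.assoc)
qed

context
  fixes J Jt Jh :: "'n::finite cmat"
  assumes c1: "Jt ** J = J ** Jt" and c2: "Jh ** J = J ** Jh" and c3: "Jh ** Jt = Jt ** Jh"
begin
lemma F_Hml:
  fixes H :: "fld \<Rightarrow> (dir \<Rightarrow> real) \<Rightarrow> 'n cmat"
  assumes "invertible J" "invertible Jt" "invertible Jh"
    and "\<And>f \<xi> d. (\<lambda>t. H f (\<xi>(d := t))) differentiable (at (\<xi> d))"
  shows "(\<forall>i j. EL (Lag k l m J Jt Jh) H Hml i j \<xi>) \<longleftrightarrow> pd (H Hlm) \<xi> Dk = mdiv J (k - l) ** H Hlm \<xi> - H Hlm \<xi> ** mdiv J (k - m) + H Hlk \<xi> ** J ** H Hkm \<xi>"
proof -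
  have "(\<forall>i j. EL (Lag k l m J Jt Jh) H Hml i j \<xi>) \<longleftrightarrow> (\<forall>i j. (Jt ** (pd (H Hlm) \<xi> Dk - (mdiv J (k - l) ** H Hlm \<xi> - H Hlm \<xi> ** mdiv J (k - m) + H Hlk \<xi> ** J ** H Hkm \<xi>)) ** Jh) $ j $ i = 0)"
    unfolding EL_eq[OF assms(4)] Z_Hml[OF c1 c2 c3, where U="\<lambda>g. H g \<xi>" and V="\<lambda>d g. pd (H g) \<xi> d"] by (rule refl)
  also have "\<dots> \<longleftrightarrow> pd (H Hlm) \<xi> Dk - (mdiv J (k - l) ** H Hlm \<xi> - H Hlm \<xi> ** mdiv J (k - m) + H Hlk \<xi> ** J ** H Hkm \<xi>) = 0" by (rule inv0[OF assms(2) assms(3)])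
  also have "\<dots> \<longleftrightarrow> pd (H Hlm) \<xi> Dk = mdiv J (k - l) ** H Hlm \<xi> - H Hlm \<xi> ** mdiv J (k - m) + H Hlk \<xi> ** J ** H Hkm \<xi>" by (simp only: right_minus_eq)
  finally show ?thesis .
qed
lemma F_Hlm:
  fixes H :: "fld \<Rightarrow> (dir \<Rightarrow> real) \<Rightarrow> 'n cmat"
  assumes "invertible J" "invertible Jt" "invertible Jh"
    and "\<And>f \<xi> d. (\<lambda>t. H f (\<xi>(d := t))) differentiable (at (\<xi> d))"
  shows "(\<forall>i j. EL (Lag k l m J Jt Jh) H Hlm i j \<xi>) \<longleftrightarrow> pd (H Hml) \<xi> Dk = mdiv J (k - m) ** H Hml \<xi> - H Hml \<xi> ** mdiv J (k - l) + H Hmk \<xi> ** J ** H Hkl \<xi>"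
proof -
  have "(\<forall>i j. EL (Lag k l m J Jt Jh) H Hlm i j \<xi>) \<longleftrightarrow> (\<forall>i j. (Jh ** ((mdiv J (k - m) ** H Hml \<xi> - H Hml \<xi> ** mdiv J (k - l) + H Hmk \<xi> ** J ** H Hkl \<xi>) - pd (H Hml) \<xi> Dk) ** Jt) $ j $ i = 0)"
    unfolding EL_eq[OF assms(4)] Z_Hlm[OF c1 c2 c3, where U="\<lambda>g. H g \<xi>" and V="\<lambda>d g. pd (H g) \<xi> d"] by (rule refl)
  also have "\<dots> \<longleftrightarrow> (mdiv J (k - m) ** H Hml \<xi> - H Hml \<xi> ** mdiv J (k - l) + H Hmk \<xi> ** J ** H Hkl \<xi>) - pd (H Hml) \<xi> Dk = 0" by (rule inv0[OF assms(3) assms(2)])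
  also have "\<dots> \<longleftrightarrow> pd (H Hml) \<xi> Dk = mdiv J (k - m) ** H Hml \<xi> - H Hml \<xi> ** mdiv J (k - l) + H Hmk \<xi> ** J ** H Hkl \<xi>" by (simp only: right_minus_eq) (rule eq_commute)
  finally show ?thesis .
qed
lemma F_Hkm:
  fixes H :: "fld \<Rightarrow> (dir \<Rightarrow> real) \<Rightarrow> 'n cmat"
  assumes "invertible J" "invertible Jt" "invertible Jh"
    and "\<And>f \<xi> d. (\<lambda>t. H f (\<xi>(d := t))) differentiable (at (\<xi> d))"
  shows "(\<forall>i j. EL (Lag k l m J Jt Jh) H Hkm i j \<xi>) \<longleftrightarrow> pd (H Hmk) \<xi> Dl = mdiv Jt (l - m) ** H Hmk \<xi> - H Hmk \<xi> ** mdiv Jt (l - k) + H Hml \<xi> ** Jt ** H Hlk \<xi>"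
proof -
  have "(\<forall>i j. EL (Lag k l m J Jt Jh) H Hkm i j \<xi>) \<longleftrightarrow> (\<forall>i j. (Jh ** (pd (H Hmk) \<xi> Dl - (mdiv Jt (l - m) ** H Hmk \<xi> - H Hmk \<xi> ** mdiv Jt (l - k) + H Hml \<xi> ** Jt ** H Hlk \<xi>)) ** J) $ j $ i = 0)"
    unfolding EL_eq[OF assms(4)] Z_Hkm[OF c1 c2 c3, where U="\<lambda>g. H g \<xi>" and V="\<lambda>d g. pd (H g) \<xi> d"] by (rule refl)
  also have "\<dots> \<longleftrightarrow> pd (H Hmk) \<xi> Dl - (mdiv Jt (l - m) ** H Hmk \<xi> - H Hmk \<xi> ** mdiv Jt (l - k) + H Hml \<xi> ** Jt ** H Hlk \<xi>) = 0" by (rule inv0[OF assms(3) assms(1)])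
  also have "\<dots> \<longleftrightarrow> pd (H Hmk) \<xi> Dl = mdiv Jt (l - m) ** H Hmk \<xi> - H Hmk \<xi> ** mdiv Jt (l - k) + H Hml \<xi> ** Jt ** H Hlk \<xi>" by (simp only: right_minus_eq)
  finally show ?thesis .
qed
lemma F_Hmk:
  fixes H :: "fld \<Rightarrow> (dir \<Rightarrow> real) \<Rightarrow> 'n cmat"
  assumes "invertible J" "invertible Jt" "invertible Jh"
    and "\<And>f \<xi> d. (\<lambda>t. H f (\<xi>(d := t))) differentiable (at (\<xi> d))"
  shows "(\<forall>i j. EL (Lag k l m J Jt Jh) H Hmk i j \<xi>) \<longleftrightarrow> pd (H Hkm) \<xi> Dl = mdiv Jt (l - k) ** H Hkm \<xi> - H Hkm \<xi> ** mdiv Jt (l - m) + H Hkl \<xi> ** Jt ** H Hlm \<xi>"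
proof -
  have "(\<forall>i j. EL (Lag k l m J Jt Jh) H Hmk i j \<xi>) \<longleftrightarrow> (\<forall>i j. (J ** ((mdiv Jt (l - k) ** H Hkm \<xi> - H Hkm \<xi> ** mdiv Jt (l - m) + H Hkl \<xi> ** Jt ** H Hlm \<xi>) - pd (H Hkm) \<xi> Dl) ** Jh) $ j $ i = 0)"
    unfolding EL_eq[OF assms(4)] Z_Hmk[OF c1 c2 c3, where U="\<lambda>g. H g \<xi>" and V="\<lambda>d g. pd (H g) \<xi> d"] by (rule refl)
  also have "\<dots> \<longleftrightarrow> (mdiv Jt (l - k) ** H Hkm \<xi> - H Hkm \<xi> ** mdiv Jt (l - m) + H Hkl \<xi> ** Jt ** H Hlm \<xi>) - pd (H Hkm) \<xi> Dl = 0" by (rule inv0[OF assms(1) assms(3)])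
  also have "\<dots> \<longleftrightarrow> pd (H Hkm) \<xi> Dl = mdiv Jt (l - k) ** H Hkm \<xi> - H Hkm \<xi> ** mdiv Jt (l - m) + H Hkl \<xi> ** Jt ** H Hlm \<xi>" by (simp only: right_minus_eq) (rule eq_commute)
  finally show ?thesis .
qed
lemma F_Hlk:
  fixes H :: "fld \<Rightarrow> (dir \<Rightarrow> real) \<Rightarrow> 'n cmat"
  assumes "invertible J" "invertible Jt" "invertible Jh"
    and "\<And>f \<xi> d. (\<lambda>t. H f (\<xi>(d := t))) differentiable (at (\<xi> d))"
  shows "(\<forall>i j. EL (Lag k l m J Jt Jh) H Hlk i j \<xi>) \<longleftrightarrow> pd (H Hkl) \<xi> Dm = mdiv Jh (m - k) ** H Hkl \<xi> - H Hkl \<xi> ** mdiv Jh (m - l) + H Hkm \<xi> ** Jh ** H Hml \<xi>"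
proof -
  have "(\<forall>i j. EL (Lag k l m J Jt Jh) H Hlk i j \<xi>) \<longleftrightarrow> (\<forall>i j. (J ** (pd (H Hkl) \<xi> Dm - (mdiv Jh (m - k) ** H Hkl \<xi> - H Hkl \<xi> ** mdiv Jh (m - l) + H Hkm \<xi> ** Jh ** H Hml \<xi>)) ** Jt) $ j $ i = 0)"
    unfolding EL_eq[OF assms(4)] Z_Hlk[OF c1 c2 c3, where U="\<lambda>g. H g \<xi>" and V="\<lambda>d g. pd (H g) \<xi> d"] by (rule refl)
  also have "\<dots> \<longleftrightarrow> pd (H Hkl) \<xi> Dm - (mdiv Jh (m - k) ** H Hkl \<xi> - H Hkl \<xi> ** mdiv Jh (m - l) + H Hkm \<xi> ** Jh ** H Hml \<xi>) = 0" by (rule inv0[OF assms(1) assms(2)])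
  also have "\<dots> \<longleftrightarrow> pd (H Hkl) \<xi> Dm = mdiv Jh (m - k) ** H Hkl \<xi> - H Hkl \<xi> ** mdiv Jh (m - l) + H Hkm \<xi> ** Jh ** H Hml \<xi>" by (simp only: right_minus_eq)
  finally show ?thesis .
qed
lemma F_Hkl:
  fixes H :: "fld \<Rightarrow> (dir \<Rightarrow> real) \<Rightarrow> 'n cmat"
  assumes "invertible J" "invertible Jt" "invertible Jh"
    and "\<And>f \<xi> d. (\<lambda>t. H f (\<xi>(d := t))) differentiable (at (\<xi> d))"
  shows "(\<forall>i j. EL (Lag k l m J Jt Jh) H Hkl i j \<xi>) \<longleftrightarrow> pd (H Hlk) \<xi> Dm = mdiv Jh (m - l) ** H Hlk \<xi> - H Hlk \<xi> ** mdiv Jh (m - k) + H Hlm \<xi> ** Jh ** H Hmk \<xi>"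
proof -
  have "(\<forall>i j. EL (Lag k l m J Jt Jh) H Hkl i j \<xi>) \<longleftrightarrow> (\<forall>i j. (Jt ** ((mdiv Jh (m - l) ** H Hlk \<xi> - H Hlk \<xi> ** mdiv Jh (m - k) + H Hlm \<xi> ** Jh ** H Hmk \<xi>) - pd (H Hlk) \<xi> Dm) ** J) $ j $ i = 0)"
    unfolding EL_eq[OF assms(4)] Z_Hkl[OF c1 c2 c3, where U="\<lambda>g. H g \<xi>" and V="\<lambda>d g. pd (H g) \<xi> d"] by (rule refl)
  also have "\<dots> \<longleftrightarrow> (mdiv Jh (m - l) ** H Hlk \<xi> - H Hlk \<xi> ** mdiv Jh (m - k) + H Hlm \<xi> ** Jh ** H Hmk \<xi>) - pd (H Hlk) \<xi> Dm = 0" by (rule inv0[OF assms(2) assms(1)])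
  also have "\<dots> \<longleftrightarrow> pd (H Hlk) \<xi> Dm = mdiv Jh (m - l) ** H Hlk \<xi> - H Hlk \<xi> ** mdiv Jh (m - k) + H Hlm \<xi> ** Jh ** H Hmk \<xi>" by (simp only: right_minus_eq) (rule eq_commute)
  finally show ?thesis .
qed
end
theorem mainTheorem12:
  fixes k l m :: complex and J Jt Jh :: "('n::finite) cmat"
    and H :: "fld \<Rightarrow> (dir \<Rightarrow> real) \<Rightarrow> 'n cmat"
  assumes "k \<noteq> l" "l \<noteq> m" "k \<noteq> m"
    and "J ** Jt = Jt ** J" "J ** Jh = Jh ** J" "Jt ** Jh = Jh ** Jt"
    and "invertible J" "invertible Jt" "invertible Jh"
    and "\<And>f \<xi> d. (\<lambda>t. H f (\<xi>(d := t))) differentiable (at (\<xi> d))"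
  shows "(\<forall>\<xi> f i j. EL (Lag k l m J Jt Jh) H f i j \<xi>) \<longleftrightarrow>
    (\<forall>\<xi>. let D = (\<lambda>d f. pd (H f) \<xi> d); U = (\<lambda>f. H f \<xi>) in
       D Dk Hlm = mdiv J (k - l) ** U Hlm - U Hlm ** mdiv J (k - m) + U Hlk ** J ** U Hkm
     \<and> D Dk Hml = mdiv J (k - m) ** U Hml - U Hml ** mdiv J (k - l) + U Hmk ** J ** U Hkl
     \<and> D Dl Hmk = mdiv Jt (l - m) ** U Hmk - U Hmk ** mdiv Jt (l - k) + U Hml ** Jt ** U Hlk
     \<and> D Dl Hkm = mdiv Jt (l - k) ** U Hkm - U Hkm ** mdiv Jt (l - m) + U Hkl ** Jt ** U Hlm
     \<and> D Dm Hkl = mdiv Jh (m - k) ** U Hkl - U Hkl ** mdiv Jh (m - l) + U Hkm ** Jh ** U Hml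
     \<and> D Dm Hlk = mdiv Jh (m - l) ** U Hlk - U Hlk ** mdiv Jh (m - k) + U Hlm ** Jh ** U Hmk)"
  proof -
  have c1: "Jt ** J = J ** Jt" using assms(4) by (rule sym)
  have c2: "Jh ** J = J ** Jh" using assms(5) by (rule sym)
  have c3: "Jh ** Jt = Jt ** Jh" using assms(6) by (rule sym)
  note Fs = F_Hml[OF c1 c2 c3 assms(7) assms(8) assms(9) assms(10)]
    F_Hlm[OF c1 c2 c3 assms(7) assms(8) assms(9) assms(10)]
    F_Hkm[OF c1 c2 c3 assms(7) assms(8) assms(9) assms(10)]
    F_Hmk[OF c1 c2 c3 assms(7) assms(8) assms(9) assms(10)]
    F_Hlk[OF c1 c2 c3 assms(7) assms(8) assms(9) assms(10)]
    F_Hkl[OF c1 c2 c3 assms(7) assms(8) assms(9) assms(10)]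
  show ?thesis
    unfolding all_fld Let_def Fs by (rule refl)
qed

end
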